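(* Let $\mathcal{F}$ be the star-shaped frame described below, let $d_i$ be a domain, and let $p$ be a $d_i$-purge function. Then $\mathcal{F}\in\mathrm{ND}^p$ iff $\mathcal{F}$ $f^p$-limits $\mathsf{IN}$-to-$C_i$ flow, i.e. iff $f^p$ is a blur operator and for every $\mathcal{B}\in\mathrm{lruns}_{C_i}$ the set $J_{C_i}^{\mathsf{IN}}(\mathcal{B})$ satisfies $f^p(J_{C_i}^{\mathsf{IN}}(\mathcal{B}))=J_{C_i}^{\mathsf{IN}}(\mathcal{B})$.
   Context: Frames and executions: a frame has locations, channels (each with a sender and recipient location) and data values; each location $\ell$ has a prefix-closed set $\mathrm{traces}(\ell)$ of finite or infinite sequences of labels (channel, data) over channels incident to $\ell$. Events come from a set $E$ with functions $\mathrm{chan}$, $\mathrm{msg}$; a system of events $(B,\preceq)$ ($B\subseteq E$, $\preceq$ a partial order with finitely many predecessors per event) is an execution ($\in\mathrm{exec}(\mathcal{F})$) iff for each location the events on its incident channels are linearly ordered and, as a label sequence, belong to its trace set. $\mathcal{A}|_C$ keeps the events whose channel is in $C$, with the restricted order; $\mathrm{lruns}_C=\{\mathcal{A}|_C:\mathcal{A}\in\mathrm{exec}(\mathcal{F})\}$; $J_C^{C'}(\mathcal{B})=\{\mathcal{A}|_{C'}:\mathcal{A}\in\mathrm{exec}(\mathcal{F}),\ \mathcal{A}|_C=\mathcal{B}\}$. Setting: a finite set of domains $\{d_1,\dots,d_k\}$ with a reflexive relation $\hookrightarrow$; $\mathcal{F}$ has locations $d_1,\dots,d_k,M$ and channels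 $c_j^{\mathrm{in}}$ (sender $d_j$, recipient $M$) and $c_j^{\mathrm{out}}$ (sender $M$, recipient $d_j$), with given trace sets (e.g. induced by a possibly nondeterministic state machine at $M$). $C_i=\{c_i^{\mathrm{in}},c_i^{\mathrm{out}}\}$, $\mathrm{vis}(d_i)=\{c_j^{\mathrm{in}}:d_j\hookrightarrow d_i\}$, $\mathsf{IN}=\{c_j^{\mathrm{in}}:1\le j\le k\}$, $\mathrm{inp}(\mathcal{A})=\mathcal{A}|_{\mathsf{IN}}$. A $d_i$-purge function is a function $p$ from $\mathrm{exec}(\mathcal{F})$ to some set such that (1) $\mathrm{inp}(\mathcal{A})=\mathrm{inp}(\mathcal{A}')$ implies $p(\mathcal{A})=p(\mathcal{A}')$, and (2) $p(\mathcal{A})=p(\mathcal{A}')$ implies $\mathcal{A}|_{\mathrm{vis}(d_i)}=\mathcal{A}'|_{\mathrm{vis}(d_i)}$. $\mathcal{F}\in\mathrm{ND}^p$ iff for all $\mathcal{A},\mathcal{A}'\in\mathrm{exec}(\mathcal{F})$, $p(\mathcal{A})=p(\mathcal{A}')$ implies $\mathcal{A}'|_{\mathsf{IN}}\in J_{C_i}^{\mathsf{IN}}(\mathcal{A}|_{C_i})$. Define the relation $\mathcal{R}$ on $\mathrm{lruns}_{\mathsf{IN}}$ by $\mathcal{R}(\mathcal{B}_1,\mathcal{B}_2)$ iff there exist $\mathcal{A}_1,\mathcal{A}_2\in\mathrm{exec}(\mathcal{F})$ with $\mathcal{B}_j=\mathcal{A}_j|_{\mathsf{IN}}$ ($j=1,2$)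 and $p(\mathcal{A}_1)=p(\mathcal{A}_2)$ (an equivalence relation on $\mathrm{lruns}_{\mathsf{IN}}$), and let $f^p(S)=\{\mathcal{B}_2\in\mathrm{lruns}_{\mathsf{IN}}:\exists\mathcal{B}_1\in S,\ \mathcal{R}(\mathcal{B}_1,\mathcal{B}_2)\}$ for $S\subseteq\mathrm{lruns}_{\mathsf{IN}}$ (closure under $\mathcal{R}$-classes). A blur operator is a function $f$ on sets with $S\subseteq f(S)$, $f(f(S))=f(S)$ and $f(\bigcup_i S_i)=\bigcup_i f(S_i)$. *)

theory Defs
  imports Main
begin

text \<open>Locations: the domains (elements of a finite type 'dom) and the hub M.
  Channels: cin d (sender d, recipient M) and cout d (sender M, recipient d).\<close>

datatype 'dom loc = Dom 'dom | Mid
datatype 'dom chan = Cin 'dom | Cout 'dom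

fun sender :: "'dom chan \<Rightarrow> 'dom loc" where
  "sender (Cin d) = Dom d" | "sender (Cout d) = Mid"
fun recipient :: "'dom chan \<Rightarrow> 'dom loc" where
  "recipient (Cin d) = Mid" | "recipient (Cout d) = Dom d"

definition incident :: "'dom loc \<Rightarrow> 'dom chan \<Rightarrow> bool" where
  "incident l c \<longleftrightarrow> sender c = l \<or> recipient c = l"

text \<open>A (finite or infinite) sequence is a partial function on nat whose domain is
  downward closed; None marks the end of a finite sequence.\<close>
type_synonym ('c,'d) trace = "nat \<Rightarrow> ('c \<times> 'd) option"

definition is_seq :: "('c,'d) trace \<Rightarrow> bool" where
  "is_seq t \<longleftrightarrow> (\<forall>n m. m \<le> n \<longrightarrow> t n \<noteq> None \<longrightarrow> t m \<noteq> None)"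

definition is_prefix :: "('c,'d) trace \<Rightarrow> ('c,'d) trace \<Rightarrow> bool" where
  "is_prefix s t \<longleftrightarrow> is_seq s \<and> (\<forall>n. s n \<noteq> None \<longrightarrow> s n = t n)"

definition frame_wf :: "('dom loc \<Rightarrow> ('dom chan,'d) trace set) \<Rightarrow> bool" where
  "frame_wf tr \<longleftrightarrow> (\<forall>l. \<forall>t\<in>tr l.
      is_seq t \<and> (\<forall>n c v. t n = Some (c, v) \<longrightarrow> incident l c)
      \<and> (\<forall>s. is_prefix s t \<longrightarrow> s \<in> tr l))"

text \<open>Events are elements of a type 'e (the set E = UNIV) with functions chan and msg.\<close>
type_synonym 'e sys = "'e set \<times> ('e \<times> 'e) set"

definition is_system :: "'e sys \<Rightarrow> bool" where
  "is_system A \<longleftrightarrow> (snd A \<subseteq> fst A \<times> fst A \<and> refl_on (fst A) (snd A) \<and> antisym (snd A)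
      \<and> trans (snd A) \<and> (\<forall>e\<in>fst A. finite {x. (x, e) \<in> snd A}))"

definition loc_events :: "('e \<Rightarrow> 'dom chan) \<Rightarrow> 'e sys \<Rightarrow> 'dom loc \<Rightarrow> 'e set" where
  "loc_events chan A l = {e \<in> fst A. incident l (chan e)}"

definition npred :: "('e \<Rightarrow> 'dom chan) \<Rightarrow> 'e sys \<Rightarrow> 'dom loc \<Rightarrow> 'e \<Rightarrow> nat" where
  "npred chan A l e = card {x \<in> loc_events chan A l. (x, e) \<in> snd A \<and> x \<noteq> e}"

definition label_seq :: "('e \<Rightarrow> 'dom chan) \<Rightarrow> ('e \<Rightarrow> 'd) \<Rightarrow> 'e sys \<Rightarrow> 'dom loc
    \<Rightarrow> ('dom chan,'d) trace" where
  "label_seq chan msg A l n =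
    (if \<exists>e\<in>loc_events chan A l. npred chan A l e = n
     then Some (let e = (THE e. e \<in> loc_events chan A l \<and> npred chan A l e = n)
                in (chan e, msg e))
     else None)"

definition exec :: "('e \<Rightarrow> 'dom chan) \<Rightarrow> ('e \<Rightarrow> 'd) \<Rightarrow> ('dom loc \<Rightarrow> ('dom chan,'d) trace set)
    \<Rightarrow> 'e sys set" where
  "exec chan msg tr = {A. is_system A \<and>
     (\<forall>l. (\<forall>e\<in>loc_events chan A l. \<forall>e'\<in>loc_events chan A l. (e, e') \<in> snd A \<or> (e', e) \<in> snd A)
          \<and> label_seq chan msg A l \<in> tr l)}"

definition restr :: "('e \<Rightarrow> 'dom chan) \<Rightarrow> 'e sys \<Rightarrow> 'dom chan set \<Rightarrow> 'e sys" where
  "restr chan A C = (let B' = {e \<in> fst A. chan e \<in> C} in (B', snd A \<inter> (B' \<times> B')))"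

definition lruns :: "('e \<Rightarrow> 'dom chan) \<Rightarrow> ('e \<Rightarrow> 'd) \<Rightarrow> ('dom loc \<Rightarrow> ('dom chan,'d) trace set)
    \<Rightarrow> 'dom chan set \<Rightarrow> 'e sys set" where
  "lruns chan msg tr C = (\<lambda>A. restr chan A C) ` exec chan msg tr"

definition Jrel :: "('e \<Rightarrow> 'dom chan) \<Rightarrow> ('e \<Rightarrow> 'd) \<Rightarrow> ('dom loc \<Rightarrow> ('dom chan,'d) trace set)
    \<Rightarrow> 'dom chan set \<Rightarrow> 'dom chan set \<Rightarrow> 'e sys \<Rightarrow> 'e sys set" where
  "Jrel chan msg tr C C' B =
     {restr chan A C' | A. A \<in> exec chan msg tr \<and> restr chan A C = B}"

definition Ci :: "'dom \<Rightarrow> 'dom chan set" where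
  "Ci i = {Cin i, Cout i}"

definition IN :: "'dom chan set" where
  "IN = range Cin"

definition vis :: "('dom \<Rightarrow> 'dom \<Rightarrow> bool) \<Rightarrow> 'dom \<Rightarrow> 'dom chan set" where
  "vis flows i = {Cin j | j. flows j i}"

definition purge_fun :: "('e \<Rightarrow> 'dom chan) \<Rightarrow> ('e \<Rightarrow> 'd) \<Rightarrow> ('dom loc \<Rightarrow> ('dom chan,'d) trace set)
    \<Rightarrow> ('dom \<Rightarrow> 'dom \<Rightarrow> bool) \<Rightarrow> 'dom \<Rightarrow> ('e sys \<Rightarrow> 'r) \<Rightarrow> bool" where
  "purge_fun chan msg tr flows i p \<longleftrightarrow>
     (\<forall>A\<in>exec chan msg tr. \<forall>A'\<in>exec chan msg tr.
        (restr chan A IN = restr chan A' IN \<longrightarrow> p A = p A') \<and>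
        (p A = p A' \<longrightarrow> restr chan A (vis flows i) = restr chan A' (vis flows i)))"

definition ND :: "('e \<Rightarrow> 'dom chan) \<Rightarrow> ('e \<Rightarrow> 'd) \<Rightarrow> ('dom loc \<Rightarrow> ('dom chan,'d) trace set)
    \<Rightarrow> 'dom \<Rightarrow> ('e sys \<Rightarrow> 'r) \<Rightarrow> bool" where
  "ND chan msg tr i p \<longleftrightarrow>
     (\<forall>A\<in>exec chan msg tr. \<forall>A'\<in>exec chan msg tr.
        p A = p A' \<longrightarrow> restr chan A' IN \<in> Jrel chan msg tr (Ci i) IN (restr chan A (Ci i)))"

definition Rp :: "('e \<Rightarrow> 'dom chan) \<Rightarrow> ('e \<Rightarrow> 'd) \<Rightarrow> ('dom loc \<Rightarrow> ('dom chan,'d) trace set)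
    \<Rightarrow> ('e sys \<Rightarrow> 'r) \<Rightarrow> 'e sys \<Rightarrow> 'e sys \<Rightarrow> bool" where
  "Rp chan msg tr p B1 B2 \<longleftrightarrow>
     (\<exists>A1\<in>exec chan msg tr. \<exists>A2\<in>exec chan msg tr.
        B1 = restr chan A1 IN \<and> B2 = restr chan A2 IN \<and> p A1 = p A2)"

definition fp :: "('e \<Rightarrow> 'dom chan) \<Rightarrow> ('e \<Rightarrow> 'd) \<Rightarrow> ('dom loc \<Rightarrow> ('dom chan,'d) trace set)
    \<Rightarrow> ('e sys \<Rightarrow> 'r) \<Rightarrow> 'e sys set \<Rightarrow> 'e sys set" where
  "fp chan msg tr p S =
     {B2 \<in> lruns chan msg tr IN. \<exists>B1\<in>S. Rp chan msg tr p B1 B2}"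

definition blur_on :: "'a set \<Rightarrow> ('a set \<Rightarrow> 'a set) \<Rightarrow> bool" where
  "blur_on U f \<longleftrightarrow>
     (\<forall>S. S \<subseteq> U \<longrightarrow> S \<subseteq> f S \<and> f S \<subseteq> U \<and> f (f S) = f S) \<and>
     (\<forall>SS. (\<forall>S\<in>SS. S \<subseteq> U) \<longrightarrow> f (\<Union>SS) = (\<Union>S\<in>SS. f S))"

definition f_limits :: "('e \<Rightarrow> 'dom chan) \<Rightarrow> ('e \<Rightarrow> 'd) \<Rightarrow> ('dom loc \<Rightarrow> ('dom chan,'d) trace set)
    \<Rightarrow> ('e sys set \<Rightarrow> 'e sys set) \<Rightarrow> 'dom chan set \<Rightarrow> 'dom chan set \<Rightarrow> bool" where
  "f_limits chan msg tr f Csrc Cdst \<longleftrightarrow>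
     blur_on (lruns chan msg tr Csrc) f \<and>
     (\<forall>B\<in>lruns chan msg tr Cdst.
        f (Jrel chan msg tr Cdst Csrc B) = Jrel chan msg tr Cdst Csrc B)"

end

theory Submission
  imports Defs
begin

lemma purge_in:
  assumes "purge_fun chan msg tr flows i p" "A \<in> exec chan msg tr" "A' \<in> exec chan msg tr"
    "restr chan A IN = restr chan A' IN"
  shows "p A = p A'"
  using assms unfolding purge_fun_def by blast

lemma blur_fp:
  assumes "purge_fun chan msg tr flows i p"
  shows "blur_on (lruns chan msg tr IN) (fp chan msg tr p)"
proof -
  have refl: "B \<in> fp chan msg tr p S" if "B \<in> S" "S \<subseteq> lruns chan msg tr IN" for B S
  proof -
    from that obtain A where A: "A \<in> exec chan msg tr" "B = restr chan A IN"
      unfolding lruns_def by blast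
    hence "Rp chan msg tr p B B" unfolding Rp_def by blast
    thus ?thesis using that unfolding fp_def by blast
  qed
  have trans: "Rp chan msg tr p B1 B3" if "Rp chan msg tr p B1 B2" "Rp chan msg tr p B2 B3"
    for B1 B2 B3
  proof -
    from that(1) obtain A1 A2 where a: "A1 \<in> exec chan msg tr" "A2 \<in> exec chan msg tr"
      "B1 = restr chan A1 IN" "B2 = restr chan A2 IN" "p A1 = p A2" unfolding Rp_def by blast
    from that(2) obtain A2' A3 where b: "A2' \<in> exec chan msg tr" "A3 \<in> exec chan msg tr"
      "B2 = restr chan A2' IN" "B3 = restr chan A3 IN" "p A2' = p A3" unfolding Rp_def by blast
    have "p A2 = p A2'" using purge_in[OF assms a(2) b(1)] a b by simp
    thus ?thesis using a b unfolding Rp_def by metis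
  qed
  show ?thesis unfolding blur_on_def
  proof (intro conjI allI impI)
    fix S assume S: "S \<subseteq> lruns chan msg tr IN"
    show "S \<subseteq> fp chan msg tr p S" using refl S by blast
    show "fp chan msg tr p S \<subseteq> lruns chan msg tr IN" unfolding fp_def by blast
    have sub: "fp chan msg tr p S \<subseteq> lruns chan msg tr IN" unfolding fp_def by blast
    show "fp chan msg tr p (fp chan msg tr p S) = fp chan msg tr p S"
    proof
      show "fp chan msg tr p (fp chan msg tr p S) \<subseteq> fp chan msg tr p S"
        unfolding fp_def using trans by blast
      show "fp chan msg tr p S \<subseteq> fp chan msg tr p (fp chan msg tr p S)"
        using refl[OF _ sub] by blast
    qed
  next
    fix SS :: "'a sys set set"
    show "fp chan msg tr p (\<Union>SS) = (\<Union>S\<in>SS. fp chan msg tr p S)"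
      unfolding fp_def by blast
  qed
qed

theorem lemma10:
  fixes chan :: "'e \<Rightarrow> ('dom::finite) chan"
    and msg :: "'e \<Rightarrow> 'd"
    and tr :: "'dom loc \<Rightarrow> ('dom chan, 'd) trace set"
    and flows :: "'dom \<Rightarrow> 'dom \<Rightarrow> bool"
    and i :: 'dom
    and p :: "'e sys \<Rightarrow> 'r"
  assumes "frame_wf tr"
    and "\<forall>d. flows d d"
    and "purge_fun chan msg tr flows i p"
  shows "ND chan msg tr i p \<longleftrightarrow> f_limits chan msg tr (fp chan msg tr p) IN (Ci i)"
proof
  assume nd: "ND chan msg tr i p"
  show "f_limits chan msg tr (fp chan msg tr p) IN (Ci i)"
    unfolding f_limits_def
  proof (intro conjI ballI)
    show "blur_on (lruns chan msg tr IN) (fp chan msg tr p)" using blur_fp[OF assms(3)] .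
  next
    fix B assume "B \<in> lruns chan msg tr (Ci i)"
    let ?J = "Jrel chan msg tr (Ci i) IN B"
    show "fp chan msg tr p ?J = ?J"
    proof
      show "fp chan msg tr p ?J \<subseteq> ?J"
      proof
        fix x assume "x \<in> fp chan msg tr p ?J"
        then obtain B1 where "B1 \<in> ?J" "Rp chan msg tr p B1 x" unfolding fp_def by blast
        then obtain A1 A1' A2 where a: "A1 \<in> exec chan msg tr" "restr chan A1 (Ci i) = B"
          "B1 = restr chan A1 IN" "A1' \<in> exec chan msg tr" "A2 \<in> exec chan msg tr"
          "B1 = restr chan A1' IN" "x = restr chan A2 IN" "p A1' = p A2"
          unfolding Jrel_def Rp_def by blast
        have "p A1 = p A1'" using purge_in[OF assms(3) a(1) a(4)] a by simp
        with a nd show "x \<in> ?J" unfolding ND_def by metis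
      qed
      show "?J \<subseteq> fp chan msg tr p ?J"
        using blur_fp[OF assms(3)] unfolding blur_on_def
        by (smt (verit, best) Jrel_def lruns_def image_iff mem_Collect_eq subsetI)
    qed
  qed
next
  assume fl: "f_limits chan msg tr (fp chan msg tr p) IN (Ci i)"
  show "ND chan msg tr i p" unfolding ND_def
  proof (intro ballI impI)
    fix A A' assume A: "A \<in> exec chan msg tr" "A' \<in> exec chan msg tr" "p A = p A'"
    let ?B = "restr chan A (Ci i)"
    have B: "?B \<in> lruns chan msg tr (Ci i)" using A unfolding lruns_def by blast
    have "restr chan A IN \<in> Jrel chan msg tr (Ci i) IN ?B" using A unfolding Jrel_def by blast
    moreover have "Rp chan msg tr p (restr chan A IN) (restr chan A' IN)"
      using A unfolding Rp_def by blast
    moreover have "restr chan A' IN \<in> lruns chan msg tr IN" using A unfolding lruns_def by blast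
    ultimately have "restr chan A' IN \<in> fp chan msg tr p (Jrel chan msg tr (Ci i) IN ?B)"
      unfolding fp_def by blast
    thus "restr chan A' IN \<in> Jrel chan msg tr (Ci i) IN ?B" using fl B unfolding f_limits_def by simp
  qed
qed

end
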